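(* Let $\mathbb{F}$ be a field, $n\ge 1$, and $d=2d'$ an even positive integer. Let $X^1,\dots,X^d$ be pairwise disjoint sets of variables $X^i=\{x^i_{jk}:j,k\in[n]\}$, $X=\bigcup_iX^i$, and $A^i$ the $n\times n$ matrix with $(j,k)$ entry $x^i_{jk}$. Let $B$ be the bijection from $X$ onto $Y\cup Z$ that maps each variable $x^{2i-1}_{jk}$ of an odd-numbered matrix to a distinct variable $y^{2i-1}_{jk}\in Y$ and each variable $x^{2i}_{jk}$ of an even-numbered matrix to a distinct variable $z^{2i}_{jk}\in Z$. Let $f_{ij}$ be the $(i,j)$ entry of $\prod_{k\in[d]}A^k$. Then: (1) for all $i,j\in[n]$, $\mathrm{rank}(M_{f_{ij}^B})=n^{d-1}$; (2) for any $i\in[n]$ and $j\neq j'\in[n]$, the sets of non-zero columns of $M_{f_{ij}^B}$ and $M_{f_{ij'}^B}$ are disjoint.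
   Context: $f^B$ denotes $f$ with each $x$ replaced by $B(x)$. For $g\in\mathbb{F}[Y,Z]$, the polynomial coefficient matrix $M_g$ has rows indexed by monic multilinear monomials $p$ in $Y$ and columns by monic multilinear monomials $q$ in $Z$, with $M_g(p,q)=G$ iff $g=pq\,G+Q$ uniquely with $G$ containing only variables present in $p,q$ and $Q$ having no monomial divisible by $pq$ that contains only variables present in $p,q$. For multilinear $g$ (as here) the entries of $M_g$ are field constants, namely $M_g(p,q)$ is the coefficient of $pq$ in $g$. *)

theory Defs
  imports "HOL-Library.Poly_Mapping" "HOL-Library.Product_Lexorder" "Jordan_Normal_Form.DL_Rank"
begin

(* Multivariate polynomials over a field in variables of type 'v:
   ('v \<Rightarrow>\<^sub>0 nat) \<Rightarrow>\<^sub>0 'a   (monomial = exponent vector, polynomial = finitely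
   supported coefficient function; multiplication is convolution). *)
type_synonym ('v,'a) mpoly = "('v \<Rightarrow>\<^sub>0 nat) \<Rightarrow>\<^sub>0 'a"

definition mvar :: "'v \<Rightarrow> ('v,'a::comm_ring_1) mpoly" where
  "mvar v = Poly_Mapping.single (Poly_Mapping.single v 1) 1"

definition mconst :: "'a::comm_ring_1 \<Rightarrow> ('v,'a) mpoly" where
  "mconst c = Poly_Mapping.single 0 c"

definition rename_vars :: "('v \<Rightarrow> 'w) \<Rightarrow> ('v,'a::comm_ring_1) mpoly \<Rightarrow> ('w,'a) mpoly" where
  "rename_vars B f =
     (\<Sum>m\<in>Poly_Mapping.keys f. mconst (Poly_Mapping.lookup f m) *
          (\<Prod>v\<in>Poly_Mapping.keys m. mvar (B v) ^ Poly_Mapping.lookup m v))"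

(* n x n matrices with entries in a ring, as functions on indices 0..n-1 *)
definition matmul :: "nat \<Rightarrow> (nat \<Rightarrow> nat \<Rightarrow> 'b::comm_ring_1) \<Rightarrow> (nat \<Rightarrow> nat \<Rightarrow> 'b)
                      \<Rightarrow> (nat \<Rightarrow> nat \<Rightarrow> 'b)" where
  "matmul n P Q = (\<lambda>j k. \<Sum>l<n. P j l * Q l k)"

definition idmat :: "nat \<Rightarrow> nat \<Rightarrow> 'b::comm_ring_1" where
  "idmat j k = (if j = k then 1 else 0)"

(* The X-variables: x^i_{jk} is (i,j,k), i \<in> {1..d}, j,k \<in> {0..<n} *)
type_synonym xvar = "nat \<times> nat \<times> nat"

definition Amat :: "nat \<Rightarrow> nat \<Rightarrow> nat \<Rightarrow> (xvar,'a::comm_ring_1) mpoly" where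
  "Amat i j k = mvar (i, j, k)"

definition fentry :: "nat \<Rightarrow> nat \<Rightarrow> nat \<Rightarrow> nat \<Rightarrow> (xvar,'a::comm_ring_1) mpoly" where
  "fentry n d j k = foldr (\<lambda>t acc. matmul n (Amat t) acc) [1..<d+1] idmat j k"

(* Y \<union> Z variables: (True,i,j,k) = y^i_{jk} (i odd), (False,i,j,k) = z^i_{jk} (i even) *)
type_synonym yzvar = "bool \<times> nat \<times> nat \<times> nat"

definition Bmap :: "xvar \<Rightarrow> yzvar" where
  "Bmap x = (case x of (i, j, k) \<Rightarrow> (odd i, i, j, k))"

definition Xvars :: "nat \<Rightarrow> nat \<Rightarrow> xvar set" where
  "Xvars n d = {(i, j, k). i \<in> {1..d} \<and> j < n \<and> k < n}"

definition Yvars :: "nat \<Rightarrow> nat \<Rightarrow> yzvar set" where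
  "Yvars n d = Bmap ` {(i, j, k). i \<in> {1..d} \<and> odd i \<and> j < n \<and> k < n}"

definition Zvars :: "nat \<Rightarrow> nat \<Rightarrow> yzvar set" where
  "Zvars n d = Bmap ` {(i, j, k). i \<in> {1..d} \<and> even i \<and> j < n \<and> k < n}"

definition mlmonos :: "'v set \<Rightarrow> ('v \<Rightarrow>\<^sub>0 nat) set" where
  "mlmonos V = {m. Poly_Mapping.keys m \<subseteq> V \<and> (\<forall>v. Poly_Mapping.lookup m v \<le> 1)}"

definition pcm_entry :: "('v,'a::comm_ring_1) mpoly \<Rightarrow> ('v \<Rightarrow>\<^sub>0 nat) \<Rightarrow> ('v \<Rightarrow>\<^sub>0 nat) \<Rightarrow> 'a" where
  "pcm_entry g p q = Poly_Mapping.lookup g (p + q)"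

(* M_g as a JNF matrix: rows = monic multilinear monomials in Yv, columns = those in Zv,
   both listed in increasing order (rank does not depend on the order). *)
definition pcm :: "'v::linorder set \<Rightarrow> 'v set \<Rightarrow> ('v,'a::comm_ring_1) mpoly \<Rightarrow> 'a mat" where
  "pcm Yv Zv g =
     (let rs = sorted_list_of_set (mlmonos Yv); cs = sorted_list_of_set (mlmonos Zv)
      in mat (length rs) (length cs) (\<lambda>(a, b). pcm_entry g (rs ! a) (cs ! b)))"

definition mat_rank :: "'a::field mat \<Rightarrow> nat" where
  "mat_rank M = vec_space.rank (dim_row M) M"

(* the set of (indices of) non-zero columns of M_g, identified by their monomial q *)
definition nonzero_cols :: "'v set \<Rightarrow> 'v set \<Rightarrow> ('v,'a::comm_ring_1) mpoly \<Rightarrow> ('v \<Rightarrow>\<^sub>0 nat) set" where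
  "nonzero_cols Yv Zv g = {q \<in> mlmonos Zv. \<exists>p \<in> mlmonos Yv. pcm_entry g p q \<noteq> 0}"

end

theory Submission
  imports Defs
begin


lemma rank_pperm:
  fixes A :: "'a::field mat"
  assumes A: "A \<in> carrier_mat nr nc"
  and vals: "\<forall>a<nr. \<forall>b<nc. A$$(a,b) = 0 \<or> A$$(a,b) = 1"
  and row: "\<forall>a<nr. \<forall>b<nc. \<forall>b'<nc. A$$(a,b) = 1 \<longrightarrow> A$$(a,b') = 1 \<longrightarrow> b = b'"
  and col: "\<forall>a<nr. \<forall>a'<nr. \<forall>b<nc. A$$(a,b) = 1 \<longrightarrow> A$$(a',b) = 1 \<longrightarrow> a = a'"
  shows "vec_space.rank nr A = card {(a,b). a<nr \<and> b<nc \<and> A$$(a,b) = 1}"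
proof -
  interpret vec_space "TYPE('a)" nr .
  define R where "R = {a. a<nr \<and> (\<exists>b<nc. A$$(a,b)=1)}"
  define U :: "'a vec set" where "U = unit_vec nr ` R"
  have cardU: "card U = card R" unfolding U_def
    by (rule card_image) (auto simp: inj_on_def R_def unit_vec_eq)
  have cardR: "card R = card {(a,b). a<nr \<and> b<nc \<and> A$$(a,b) = 1}"
  proof -
    have "R = fst ` {(a,b). a<nr \<and> b<nc \<and> A$$(a,b) = 1}" unfolding R_def by force
    moreover have "inj_on fst {(a,b). a<nr \<and> b<nc \<and> A$$(a,b) = 1}"
      using row by (auto simp: inj_on_def)
    ultimately show ?thesis by (simp add: card_image)
  qed
  have colv: "col A b = unit_vec nr a" if "a<nr" "b<nc" "A$$(a,b)=1" for a b
  proof (rule eq_vecI)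
    fix a' assume "a' < dim_vec (unit_vec nr a)"
    then have a': "a' < nr" by simp
    show "col A b $ a' = unit_vec nr a $ a'"
      using A a' that col vals by (auto simp: unit_vec_def) (metis)
  qed (use A in auto)
  have colz: "col A b = 0\<^sub>v nr" if "b<nc" "\<forall>a<nr. A$$(a,b) \<noteq> 1" for b
    by (rule eq_vecI) (use A that vals in auto)
  have cols_sub: "set (cols A) \<subseteq> insert (0\<^sub>v nr) U"
  proof
    fix v assume "v \<in> set (cols A)"
    then obtain b where b: "b < nc" "v = col A b" using A by (auto simp: cols_def)
    show "v \<in> insert (0\<^sub>v nr) U"
    proof (cases "\<exists>a<nr. A$$(a,b) = 1")
      case True
      then obtain a where "a<nr" "A$$(a,b)=1" by blast
      then show ?thesis using b colv[of a b] by (auto simp: U_def R_def)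
    next
      case False
      then show ?thesis using b colz by auto
    qed
  qed
  have U_sub: "U \<subseteq> set (cols A)"
  proof
    fix v assume "v \<in> U"
    then obtain a b where "a<nr" "b<nc" "A$$(a,b)=1" "v = unit_vec nr a" by (auto simp: U_def R_def)
    then show "v \<in> set (cols A)" using colv A by (auto simp: cols_def intro!: image_eqI[where x=b])
  qed
  have Uu: "U \<subseteq> set (unit_vecs nr)" by (auto simp: U_def R_def unit_vecs_def)
  have li: "lin_indpt U"
    using subset_li_is_li[OF _ Uu] unit_vecs_basis by (auto simp: basis_def)
  have "maximal U (\<lambda>T. T \<subseteq> set (cols A) \<and> lin_indpt T)"
    unfolding maximal_def
  proof (intro conjI allI impI)
    fix T assume T: "U \<subseteq> T \<and> T \<subseteq> set (cols A) \<and> lin_indpt T"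
    have "set (cols A) \<subseteq> carrier_vec nr" using A cols_dim by blast
    then have "0\<^sub>v nr \<notin> T" using T vs_zero_lin_dep[of T] by auto
    then show "T = U" using T cols_sub by auto
  qed (use U_sub li in auto)
  then have "rank A = card U" using rank_card_indpt[OF A] by blast
  then show ?thesis using cardU cardR by simp
qed



definition LS :: "nat \<Rightarrow> nat \<Rightarrow> nat \<Rightarrow> nat \<Rightarrow> nat list set" where
  "LS n L a j = {ls. length ls = L \<and> set ls \<subseteq> {..<n} \<and> last (a#ls) = j}"

definition xmono :: "nat list \<Rightarrow> nat \<Rightarrow> nat list \<Rightarrow> xvar \<Rightarrow>\<^sub>0 nat" where
  "xmono ts a ls = (\<Sum>r<length ts. Poly_Mapping.single (ts!r, (a#ls)!r, (a#ls)!(Suc r)) 1)"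

lemma finite_LS: "finite (LS n L a j)"
proof -
  have "LS n L a j \<subseteq> {ls. set ls \<subseteq> {..<n} \<and> length ls = L}" by (auto simp: LS_def)
  then show ?thesis using finite_lists_length_eq[of "{..<n}" L] finite_subset by blast
qed

lemma LS_0: "LS n 0 a j = (if a = j then {[]} else {})"
  by (auto simp: LS_def)

lemma LS_Suc: "LS n (Suc L) a j = (\<lambda>(l,ls). l#ls) ` (SIGMA l:{..<n}. LS n L l j)"
  apply (auto simp: LS_def image_iff)
  subgoal for xs by (cases xs) auto
  done

lemma xmono_Cons: "xmono (t#ts) a (l#ls) = Poly_Mapping.single (t,a,l) 1 + xmono ts l ls"
  unfolding xmono_def length_Cons sum.lessThan_Suc_shift by simp

lemma foldr_expand:
  "foldr (\<lambda>t acc. matmul n (Amat t) acc) ts idmat a j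
     = (\<Sum>ls\<in>LS n (length ts) a j. Poly_Mapping.single (xmono ts a ls) (1::'a::comm_ring_1))"
proof (induction ts arbitrary: a)
  case Nil
  then show ?case by (simp add: LS_0 idmat_def xmono_def)
next
  case (Cons t ts)
  have "foldr (\<lambda>t acc. matmul n (Amat t) acc) (t#ts) idmat a j
      = (\<Sum>l<n. Amat t a l * foldr (\<lambda>t acc. matmul n (Amat t) acc) ts idmat l j)"
    by (simp add: matmul_def)
  also have "\<dots> = (\<Sum>l<n. \<Sum>ls\<in>LS n (length ts) l j.
                    Poly_Mapping.single (xmono (t#ts) a (l#ls)) (1::'a))"
    by (simp add: Cons.IH sum_distrib_left Amat_def mvar_def mult_single xmono_Cons)
  also have "\<dots> = (\<Sum>(l,ls)\<in>(SIGMA l:{..<n}. LS n (length ts) l j).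
                    Poly_Mapping.single (xmono (t#ts) a (l#ls)) (1::'a))"
    by (rule sum.Sigma) (auto simp: finite_LS)
  also have "\<dots> = (\<Sum>xs\<in>LS n (length (t#ts)) a j. Poly_Mapping.single (xmono (t#ts) a xs) (1::'a))"
    unfolding LS_Suc length_Cons
    by (subst sum.reindex) (auto simp: inj_on_def case_prod_beta)
  finally show ?case .
qed



lemma lookup_sum_single_inj:
  assumes "finite A" "inj_on h A"
  shows "Poly_Mapping.lookup (\<Sum>x\<in>A. Poly_Mapping.single (h x) c) m = (if m \<in> h ` A then c else 0)"
proof (cases "m \<in> h ` A")
  case True
  then obtain x0 where x0: "x0 \<in> A" "m = h x0" by blast
  have "Poly_Mapping.lookup (\<Sum>x\<in>A. Poly_Mapping.single (h x) c) m = (\<Sum>x\<in>A. if x = x0 then c else 0)"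
    unfolding lookup_sum lookup_single
    by (rule sum.cong) (use x0 assms(2) in \<open>auto simp: inj_on_def when_def\<close>)
  also have "\<dots> = c" using x0 assms(1) by simp
  finally show ?thesis using True by simp
next
  case False
  then show ?thesis unfolding lookup_sum lookup_single by (auto intro!: sum.neutral)
qed

lemma sum_single_eq_iff:
  assumes "finite A" "inj_on h A" "finite A'" "inj_on h' A'"
  shows "(\<Sum>x\<in>A. Poly_Mapping.single (h x) (1::nat)) = (\<Sum>x\<in>A'. Poly_Mapping.single (h' x) 1)
         \<longleftrightarrow> h ` A = h' ` A'"
proof
  assume eq: "(\<Sum>x\<in>A. Poly_Mapping.single (h x) (1::nat)) = (\<Sum>x\<in>A'. Poly_Mapping.single (h' x) 1)"
  show "h ` A = h' ` A'"
  proof (rule Set.set_eqI)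
    fix m
    have "Poly_Mapping.lookup (\<Sum>x\<in>A. Poly_Mapping.single (h x) (1::nat)) m
        = Poly_Mapping.lookup (\<Sum>x\<in>A'. Poly_Mapping.single (h' x) 1) m" using eq by simp
    then show "m \<in> h ` A \<longleftrightarrow> m \<in> h' ` A'"
      unfolding lookup_sum_single_inj[OF assms(1,2)] lookup_sum_single_inj[OF assms(3,4)]
      by (auto split: if_splits)
  qed
next
  assume "h ` A = h' ` A'"
  then show "(\<Sum>x\<in>A. Poly_Mapping.single (h x) (1::nat)) = (\<Sum>x\<in>A'. Poly_Mapping.single (h' x) 1)"
    by (intro poly_mapping_eqI) (simp add: lookup_sum_single_inj[OF assms(1,2)] lookup_sum_single_inj[OF assms(3,4)])
qed

definition ren :: "('v \<Rightarrow> 'w) \<Rightarrow> ('v \<Rightarrow>\<^sub>0 nat) \<Rightarrow> ('w \<Rightarrow>\<^sub>0 nat)" where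
  "ren B m = (\<Sum>v\<in>Poly_Mapping.keys m. Poly_Mapping.single (B v) (Poly_Mapping.lookup m v))"

lemma ren_superset:
  assumes "finite K" "Poly_Mapping.keys m \<subseteq> K"
  shows "ren B m = (\<Sum>v\<in>K. Poly_Mapping.single (B v) (Poly_Mapping.lookup m v))"
  unfolding ren_def
  by (rule sum.mono_neutral_left) (use assms in \<open>auto simp: in_keys_iff\<close>)

lemma ren_add: "ren B (a + b) = ren B a + ren B b"
proof -
  let ?K = "Poly_Mapping.keys a \<union> Poly_Mapping.keys b"
  have k: "Poly_Mapping.keys (a + b) \<subseteq> ?K" by (rule keys_add)
  show ?thesis
    by (simp add: ren_superset[OF _ k] ren_superset[of ?K a] ren_superset[of ?K b]
        lookup_add single_add sum.distrib)
qed

lemma ren_zero: "ren B 0 = 0" by (simp add: ren_def)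

lemma ren_single: "ren B (Poly_Mapping.single v k) = Poly_Mapping.single (B v) k"
  by (cases "k = 0") (simp_all add: ren_def)

lemma ren_sum: "ren B (\<Sum>x\<in>A. Poly_Mapping.single (h x) k) = (\<Sum>x\<in>A. Poly_Mapping.single (B (h x)) k)"
proof (induction A rule: infinite_finite_induct)
  case (infinite A) then show ?case by (simp add: ren_zero)
next
  case empty then show ?case by (simp add: ren_zero)
next
  case (insert x F) then show ?case by (simp add: ren_add ren_single)
qed

lemma mvar_pow: "(mvar w :: ('w,'a::comm_ring_1) mpoly) ^ k = Poly_Mapping.single (Poly_Mapping.single w k) 1"
proof (induction k)
  case 0 then show ?case by simp
next
  case (Suc k) then show ?case
    by (simp add: mvar_def mult_single single_add[symmetric] add.commute)
qed

lemma prod_mvar: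
  "(\<Prod>v\<in>K. (mvar (B v) :: ('w,'a::comm_ring_1) mpoly) ^ e v)
     = Poly_Mapping.single (\<Sum>v\<in>K. Poly_Mapping.single (B v) (e v)) 1"
proof (induction K rule: infinite_finite_induct)
  case (infinite A) then show ?case by simp
next
  case empty then show ?case by simp
next
  case (insert x F) then show ?case by (simp add: mvar_pow mult_single)
qed

lemma rename_vars_alt:
  "rename_vars B (f :: ('v,'a::comm_ring_1) mpoly)
     = (\<Sum>m\<in>Poly_Mapping.keys f. Poly_Mapping.single (ren B m) (Poly_Mapping.lookup f m))"
  unfolding rename_vars_def prod_mvar mconst_def mult_single ren_def by simp

lemma rename_sum_single:
  assumes "finite A" "inj_on h A"
  shows "rename_vars B (\<Sum>x\<in>A. Poly_Mapping.single (h x) (1::'a::comm_ring_1))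
       = (\<Sum>x\<in>A. Poly_Mapping.single (ren B (h x)) 1)"
proof -
  let ?f = "\<Sum>x\<in>A. Poly_Mapping.single (h x) (1::'a)"
  have lk: "Poly_Mapping.lookup ?f m = (if m \<in> h ` A then 1 else 0)" for m
    by (rule lookup_sum_single_inj[OF assms])
  have keys: "Poly_Mapping.keys ?f = h ` A"
    by (auto simp: in_keys_iff lk split: if_splits)
  have "rename_vars B ?f = (\<Sum>m\<in>h ` A. Poly_Mapping.single (ren B m) (Poly_Mapping.lookup ?f m))"
    unfolding rename_vars_alt keys ..
  also have "\<dots> = (\<Sum>x\<in>A. Poly_Mapping.single (ren B (h x)) (Poly_Mapping.lookup ?f (h x)))"
    by (rule sum.reindex[OF assms(2), unfolded comp_def])
  also have "\<dots> = (\<Sum>x\<in>A. Poly_Mapping.single (ren B (h x)) 1)"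
    by (rule sum.cong) (auto simp: lk)
  finally show ?thesis .
qed



definition yf :: "nat \<Rightarrow> nat list \<Rightarrow> nat \<Rightarrow> yzvar" where
  "yf i ls r = (even r, Suc r, (i#ls)!r, (i#ls)!Suc r)"

definition ysum :: "nat \<Rightarrow> nat list \<Rightarrow> nat set \<Rightarrow> yzvar \<Rightarrow>\<^sub>0 nat" where
  "ysum i ls A = (\<Sum>r\<in>A. Poly_Mapping.single (yf i ls r) 1)"

lemma inj_yf: "inj_on (yf i ls) A" by (auto simp: inj_on_def yf_def)

lemma lookup_ysum: "finite A \<Longrightarrow> Poly_Mapping.lookup (ysum i ls A) v = (if v \<in> yf i ls ` A then 1 else 0)"
  unfolding ysum_def by (rule lookup_sum_single_inj[OF _ inj_yf])

lemma ysum_eq_iff: "finite A \<Longrightarrow> finite A' \<Longrightarrow> ysum i ls A = ysum i ls' A' \<longleftrightarrow> yf i ls ` A = yf i ls' ` A'"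
  unfolding ysum_def by (rule sum_single_eq_iff[OF _ inj_yf _ inj_yf])

abbreviation "Ev d \<equiv> {r. r < d \<and> even r}"
abbreviation "Od d \<equiv> {r. r < d \<and> odd r}"

lemma ysum_split: "ysum i ls {..<d} = ysum i ls (Ev d) + ysum i ls (Od d)"
proof -
  have "{..<d} = Ev d \<union> Od d" by auto
  then show ?thesis unfolding ysum_def by (simp only:) (rule sum.union_disjoint, auto)
qed

lemma Zpart_inj:
  assumes "length ls = d" "length ls' = d" "even d"
    and eq: "ysum i ls (Od d) = ysum i ls' (Od d)"
  shows "ls = ls'"
proof (rule nth_equalityI)
  show "length ls = length ls'" using assms by simp
  have im: "yf i ls ` Od d = yf i ls' ` Od d" using eq ysum_eq_iff[of "Od d" "Od d" i ls ls'] by simp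
  fix k assume k: "k < length ls"
  show "ls ! k = ls' ! k"
  proof (cases "odd k")
    case True
    then have "yf i ls k \<in> yf i ls' ` Od d" using im k assms(1) by auto
    then show ?thesis using True by (auto simp: yf_def)
  next
    case False
    then have "Suc k < d" using k assms by (metis Suc_lessI even_Suc odd_pos) 
    then have "yf i ls (Suc k) \<in> yf i ls' ` Od d" using im False by auto
    then show ?thesis using False by (auto simp: yf_def)
  qed
qed

lemma Ypart_inj:
  assumes "length ls = d" "length ls' = d" "0 < d" "last (i#ls) = last (i#ls')"
    and eq: "ysum i ls (Ev d) = ysum i ls' (Ev d)"
  shows "ls = ls'"
proof (rule nth_equalityI)
  show "length ls = length ls'" using assms by simp
  have im: "yf i ls ` Ev d = yf i ls' ` Ev d" using eq ysum_eq_iff[of "Ev d" "Ev d" i ls ls'] by simp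
  fix k assume k: "k < length ls"
  show "ls ! k = ls' ! k"
  proof (cases "Suc k = d")
    case True
    then show ?thesis using assms(1,2,4) k
      by (metis diff_Suc_1 last.simps last_conv_nth length_0_conv nat.distinct(1))
  next
    case F: False
    show ?thesis
    proof (cases "even k")
      case True
      then have "yf i ls k \<in> yf i ls' ` Ev d" using im k assms(1) by auto
      then show ?thesis using True by (auto simp: yf_def)
    next
      case False
      then have "Suc k < d" using k assms F by simp
      then have "yf i ls (Suc k) \<in> yf i ls' ` Ev d" using im False by auto
      then show ?thesis using False by (auto simp: yf_def)
    qed
  qed
qed



lemma ymono_inj:
  assumes "length ls = d" "length ls' = d" and eq: "ysum i ls {..<d} = ysum i ls' {..<d}"
  shows "ls = ls'"
proof (rule nth_equalityI)
  show "length ls = length ls'" using assms by simp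
  have im: "yf i ls ` {..<d} = yf i ls' ` {..<d}" using eq ysum_eq_iff[of "{..<d}" "{..<d}" i ls ls'] by simp
  fix k assume k: "k < length ls"
  then have "yf i ls k \<in> yf i ls' ` {..<d}" using im assms(1) by auto
  then show "ls ! k = ls' ! k" by (auto simp: yf_def)
qed

lemma ren_xmono: "ren Bmap (xmono [1..<d+1] i ls) = ysum i ls {..<d}"
  unfolding xmono_def ren_sum ysum_def
  by (rule sum.cong) (auto simp del: upt_Suc simp: Bmap_def yf_def nth_upt)

lemma g_expand:
  "rename_vars Bmap (fentry n d i j :: (xvar,'a::comm_ring_1) mpoly)
     = (\<Sum>ls\<in>LS n d i j. Poly_Mapping.single (ysum i ls {..<d}) 1)"
proof -
  have f: "fentry n d i j = (\<Sum>ls\<in>LS n d i j. Poly_Mapping.single (xmono [1..<d+1] i ls) (1::'a))"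
    unfolding fentry_def foldr_expand by (simp del: upt_Suc)
  have inj: "inj_on (xmono [1..<d+1] i) (LS n d i j)"
  proof (rule inj_onI)
    fix ls ls' assume "ls \<in> LS n d i j" "ls' \<in> LS n d i j" "xmono [1..<d+1] i ls = xmono [1..<d+1] i ls'"
    then show "ls = ls'" using ymono_inj[of ls d ls' i] ren_xmono[of d i] by (auto simp: LS_def) metis
  qed
  show ?thesis unfolding f rename_sum_single[OF finite_LS inj] ren_xmono ..
qed



lemma pcm_rank_generic:
  fixes g :: "('v::linorder,'a::field) mpoly"
  assumes fY: "finite (mlmonos Yv)" and fZ: "finite (mlmonos Zv)"
  and vals: "\<forall>m. Poly_Mapping.lookup g m = 0 \<or> Poly_Mapping.lookup g m = 1"
  and row: "\<forall>p\<in>mlmonos Yv. \<forall>q\<in>mlmonos Zv. \<forall>q'\<in>mlmonos Zv.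
              Poly_Mapping.lookup g (p+q) = 1 \<longrightarrow> Poly_Mapping.lookup g (p+q') = 1 \<longrightarrow> q = q'"
  and col: "\<forall>p\<in>mlmonos Yv. \<forall>p'\<in>mlmonos Yv. \<forall>q\<in>mlmonos Zv.
              Poly_Mapping.lookup g (p+q) = 1 \<longrightarrow> Poly_Mapping.lookup g (p'+q) = 1 \<longrightarrow> p = p'"
  shows "mat_rank (pcm Yv Zv g) = card {(p,q). p\<in>mlmonos Yv \<and> q\<in>mlmonos Zv \<and> Poly_Mapping.lookup g (p+q) = 1}"
proof -
  define rs where "rs = sorted_list_of_set (mlmonos Yv)"
  define cs where "cs = sorted_list_of_set (mlmonos Zv)"
  have srs: "set rs = mlmonos Yv" "distinct rs" using fY by (auto simp: rs_def)
  have scs: "set cs = mlmonos Zv" "distinct cs" using fZ by (auto simp: cs_def)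
  define M where "M = pcm Yv Zv g"
  have M: "M = mat (length rs) (length cs) (\<lambda>(a, b). Poly_Mapping.lookup g (rs ! a + cs ! b))"
    unfolding M_def pcm_def rs_def cs_def Let_def pcm_entry_def ..
  have Mc: "M \<in> carrier_mat (length rs) (length cs)" unfolding M by simp
  have Me: "M $$ (a,b) = Poly_Mapping.lookup g (rs ! a + cs ! b)" if "a < length rs" "b < length cs" for a b
    unfolding M using that by simp
  have "vec_space.rank (length rs) M = card {(a,b). a<length rs \<and> b<length cs \<and> M$$(a,b) = 1}"
  proof (rule rank_pperm[OF Mc])
    show "\<forall>a<length rs. \<forall>b<length cs. M $$ (a, b) = 0 \<or> M $$ (a, b) = 1" using vals Me by simp
    show "\<forall>a<length rs. \<forall>b<length cs. \<forall>b'<length cs. M $$ (a, b) = 1 \<longrightarrow> M $$ (a, b') = 1 \<longrightarrow> b = b'"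
    proof (intro allI impI)
      fix a b b' assume h: "a < length rs" "b < length cs" "b' < length cs" "M $$ (a, b) = 1" "M $$ (a, b') = 1"
      have m: "rs ! a \<in> mlmonos Yv" "cs ! b \<in> mlmonos Zv" "cs ! b' \<in> mlmonos Zv"
        using h srs scs nth_mem by blast+
      have "Poly_Mapping.lookup g (rs ! a + cs ! b) = 1" "Poly_Mapping.lookup g (rs ! a + cs ! b') = 1"
        using h Me by auto
      then have "cs ! b = cs ! b'" using row m by blast
      then show "b = b'" using h scs nth_eq_iff_index_eq by blast
    qed
    show "\<forall>a<length rs. \<forall>a'<length rs. \<forall>b<length cs. M $$ (a, b) = 1 \<longrightarrow> M $$ (a', b) = 1 \<longrightarrow> a = a'"
    proof (intro allI impI)
      fix a a' b assume h: "a < length rs" "a' < length rs" "b < length cs" "M $$ (a, b) = 1" "M $$ (a', b) = 1"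
      have m: "rs ! a \<in> mlmonos Yv" "rs ! a' \<in> mlmonos Yv" "cs ! b \<in> mlmonos Zv"
        using h srs scs nth_mem by blast+
      have "Poly_Mapping.lookup g (rs ! a + cs ! b) = 1" "Poly_Mapping.lookup g (rs ! a' + cs ! b) = 1"
        using h Me by auto
      then have "rs ! a = rs ! a'" using col m by blast
      then show "a = a'" using h srs nth_eq_iff_index_eq by blast
    qed
  qed
  moreover have "card {(a,b). a<length rs \<and> b<length cs \<and> M$$(a,b) = 1}
      = card {(p,q). p\<in>mlmonos Yv \<and> q\<in>mlmonos Zv \<and> Poly_Mapping.lookup g (p+q) = 1}"
  proof -
    let ?h = "\<lambda>(a,b). (rs ! a, cs ! b)"
    let ?N = "{(a,b). a<length rs \<and> b<length cs \<and> M$$(a,b) = 1}"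
    have "inj_on ?h ?N" using srs scs by (auto simp: inj_on_def nth_eq_iff_index_eq)
    moreover have "?h ` ?N = {(p,q). p\<in>mlmonos Yv \<and> q\<in>mlmonos Zv \<and> Poly_Mapping.lookup g (p+q) = 1}"
    proof (rule Set.set_eqI)
      fix x show "x \<in> ?h ` ?N \<longleftrightarrow> x \<in> {(p,q). p\<in>mlmonos Yv \<and> q\<in>mlmonos Zv \<and> Poly_Mapping.lookup g (p+q) = 1}"
      proof
        assume "x \<in> ?h ` ?N"
        then obtain a b where ab: "a<length rs" "b<length cs" "M$$(a,b) = 1" "x = (rs!a, cs!b)" by auto
        then have "rs ! a \<in> mlmonos Yv" "cs ! b \<in> mlmonos Zv" using srs scs nth_mem by blast+
        moreover have "Poly_Mapping.lookup g (rs ! a + cs ! b) = 1" using ab Me by simp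
        ultimately show "x \<in> {(p,q). p\<in>mlmonos Yv \<and> q\<in>mlmonos Zv \<and> Poly_Mapping.lookup g (p+q) = 1}"
          using ab by simp
      next
        assume "x \<in> {(p,q). p\<in>mlmonos Yv \<and> q\<in>mlmonos Zv \<and> Poly_Mapping.lookup g (p+q) = 1}"
        then obtain p q where x: "x = (p,q)" "p \<in> set rs" "q \<in> set cs" "Poly_Mapping.lookup g (p+q) = 1"
          using srs scs by auto
        then obtain a b where ab: "a < length rs" "rs ! a = p" "b < length cs" "cs ! b = q"
          by (metis in_set_conv_nth)
        then have "(a,b) \<in> ?N" using Me x by auto
        then show "x \<in> ?h ` ?N" using ab x by (auto intro!: image_eqI[where x="(a,b)"])
      qed
    qed
    ultimately show ?thesis using card_image by fastforce
  qed
  moreover have "dim_row M = length rs" using Mc by simp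
  ultimately show ?thesis unfolding mat_rank_def M_def by simp
qed



lemma fst_Y: "v \<in> Yvars n d \<Longrightarrow> fst v" by (auto simp: Yvars_def Bmap_def)
lemma fst_Z: "v \<in> Zvars n d \<Longrightarrow> \<not> fst v" by (auto simp: Zvars_def Bmap_def)

lemma keys_out: "Poly_Mapping.keys m \<subseteq> V \<Longrightarrow> v \<notin> V \<Longrightarrow> Poly_Mapping.lookup m v = 0"
  by (meson in_keys_iff subsetD)

lemma finite_mlmonos: assumes "finite V" shows "finite (mlmonos V)"
proof -
  have "inj_on Poly_Mapping.keys (mlmonos V)"
  proof (rule inj_onI)
    fix m m' assume h: "m \<in> mlmonos V" "m' \<in> mlmonos V" "Poly_Mapping.keys m = Poly_Mapping.keys m'"
    show "m = m'"
    proof (rule poly_mapping_eqI)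
      fix k
      have "Poly_Mapping.lookup m k \<le> 1" "Poly_Mapping.lookup m' k \<le> 1" using h by (auto simp: mlmonos_def)
      moreover have "Poly_Mapping.lookup m k = 0 \<longleftrightarrow> Poly_Mapping.lookup m' k = 0"
        using h(3) by (metis in_keys_iff)
      ultimately show "Poly_Mapping.lookup m k = Poly_Mapping.lookup m' k" by linarith
    qed
  qed
  moreover have "Poly_Mapping.keys ` mlmonos V \<subseteq> Pow V" by (auto simp: mlmonos_def)
  ultimately show ?thesis using assms by (meson finite_Pow_iff inj_on_finite)
qed

lemma finite_Yvars: "finite (Yvars n d)"
proof -
  have "{(i, j, k). i \<in> {1..d} \<and> odd i \<and> j < n \<and> k < n} \<subseteq> {1..d} \<times> {..<n} \<times> {..<n}" by auto
  then show ?thesis unfolding Yvars_def by (meson finite_SigmaI finite_atLeastAtMost finite_lessThan finite_subset finite_imageI)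
qed

lemma finite_Zvars: "finite (Zvars n d)"
proof -
  have "{(i, j, k). i \<in> {1..d} \<and> even i \<and> j < n \<and> k < n} \<subseteq> {1..d} \<times> {..<n} \<times> {..<n}" by auto
  then show ?thesis unfolding Zvars_def by (meson finite_SigmaI finite_atLeastAtMost finite_lessThan finite_subset finite_imageI)
qed

lemma wlt: assumes "i < n" "ls \<in> LS n d i j" "k \<le> d" shows "(i#ls)!k < n"
proof (cases k)
  case 0 then show ?thesis using assms by simp
next
  case (Suc k') then show ?thesis using assms by (auto simp: LS_def) (metis lessThan_iff nth_mem subsetD Suc_le_lessD)
qed

lemma Ypart_mem:
  assumes "i < n" "ls \<in> LS n d i j"
  shows "ysum i ls (Ev d) \<in> mlmonos (Yvars n d)"
  unfolding mlmonos_def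
proof (intro CollectI conjI allI)
  show "Poly_Mapping.keys (ysum i ls (Ev d)) \<subseteq> Yvars n d"
  proof
    fix v assume "v \<in> Poly_Mapping.keys (ysum i ls (Ev d))"
    then obtain r where r: "r < d" "even r" "v = yf i ls r"
      by (auto simp: in_keys_iff lookup_ysum split: if_splits)
    have w1: "(i#ls)!r < n" using wlt[OF assms, of r] r by simp
    have w2: "(i#ls)!Suc r < n" using wlt[OF assms, of "Suc r"] r by simp
    show "v \<in> Yvars n d" using w1 w2 r unfolding Yvars_def yf_def Bmap_def
      by (auto intro!: image_eqI[where x="(Suc r, (i#ls)!r, (i#ls)!Suc r)"])
  qed
  fix v show "Poly_Mapping.lookup (ysum i ls (Ev d)) v \<le> 1" by (simp add: lookup_ysum)
qed

lemma Zpart_mem: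
  assumes "i < n" "ls \<in> LS n d i j"
  shows "ysum i ls (Od d) \<in> mlmonos (Zvars n d)"
  unfolding mlmonos_def
proof (intro CollectI conjI allI)
  show "Poly_Mapping.keys (ysum i ls (Od d)) \<subseteq> Zvars n d"
  proof
    fix v assume "v \<in> Poly_Mapping.keys (ysum i ls (Od d))"
    then obtain r where r: "r < d" "odd r" "v = yf i ls r"
      by (auto simp: in_keys_iff lookup_ysum split: if_splits)
    have w1: "(i#ls)!r < n" using wlt[OF assms, of r] r by simp
    have w2: "(i#ls)!Suc r < n" using wlt[OF assms, of "Suc r"] r by simp
    show "v \<in> Zvars n d" using w1 w2 r unfolding Zvars_def yf_def Bmap_def
      by (auto intro!: image_eqI[where x="(Suc r, (i#ls)!r, (i#ls)!Suc r)"])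
  qed
  fix v show "Poly_Mapping.lookup (ysum i ls (Od d)) v \<le> 1" by (simp add: lookup_ysum)
qed

lemma decomp:
  assumes p: "p \<in> mlmonos (Yvars n d)" and q: "q \<in> mlmonos (Zvars n d)"
    and eq: "p + q = ysum i ls {..<d}"
  shows "p = ysum i ls (Ev d) \<and> q = ysum i ls (Od d)"
proof -
  have kp: "Poly_Mapping.keys p \<subseteq> Yvars n d" and kq: "Poly_Mapping.keys q \<subseteq> Zvars n d"
    using p q by (auto simp: mlmonos_def)
  have pv: "Poly_Mapping.lookup p v = (if fst v then Poly_Mapping.lookup (ysum i ls {..<d}) v else 0)" for v
  proof (cases "fst v")
    case True
    then have "Poly_Mapping.lookup q v = 0" using keys_out[OF kq] fst_Z by blast
    then show ?thesis using True by (simp add: eq[symmetric] lookup_add)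
  next
    case False
    then show ?thesis using keys_out[OF kp, of v] fst_Y[of v n d] by auto
  qed
  have qv: "Poly_Mapping.lookup q v = (if fst v then 0 else Poly_Mapping.lookup (ysum i ls {..<d}) v)" for v
  proof (cases "fst v")
    case False
    then have "Poly_Mapping.lookup p v = 0" using keys_out[OF kp] fst_Y by blast
    then show ?thesis using False by (simp add: eq[symmetric] lookup_add)
  next
    case True
    then show ?thesis using keys_out[OF kq, of v] fst_Z[of v n d] by auto
  qed
  show ?thesis
  proof
    show "p = ysum i ls (Ev d)"
      by (rule poly_mapping_eqI) (auto simp: pv lookup_ysum yf_def)
    show "q = ysum i ls (Od d)"
      by (rule poly_mapping_eqI) (auto simp: qv lookup_ysum yf_def)
  qed
qed

lemma card_LS: assumes "j < n" "0 < d" shows "card (LS n d i j) = n ^ (d - 1)"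
proof -
  have "LS n d i j = (\<lambda>ms. ms @ [j]) ` {ms. set ms \<subseteq> {..<n} \<and> length ms = d - 1}"
  proof (rule Set.set_eqI)
    fix ls show "ls \<in> LS n d i j \<longleftrightarrow> ls \<in> (\<lambda>ms. ms @ [j]) ` {ms. set ms \<subseteq> {..<n} \<and> length ms = d - 1}"
    proof
      assume h: "ls \<in> LS n d i j"
      then have "ls \<noteq> []" using assms by (auto simp: LS_def)
      then have "ls = butlast ls @ [j]" using h by (auto simp: LS_def)
      moreover have "set (butlast ls) \<subseteq> {..<n}" using h by (auto simp: LS_def dest: in_set_butlastD)
      ultimately show "ls \<in> (\<lambda>ms. ms @ [j]) ` {ms. set ms \<subseteq> {..<n} \<and> length ms = d - 1}"
        using h by (auto simp: LS_def intro!: image_eqI[where x="butlast ls"])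
    next
      assume "ls \<in> (\<lambda>ms. ms @ [j]) ` {ms. set ms \<subseteq> {..<n} \<and> length ms = d - 1}"
      then show "ls \<in> LS n d i j" using assms by (auto simp: LS_def)
    qed
  qed
  moreover have "inj (\<lambda>ms. ms @ [j])" by (auto simp: inj_on_def)
  ultimately show ?thesis
    by (simp add: card_image inj_on_subset[of _ UNIV] card_lists_length_eq)
qed



lemma main_ij:
  assumes ev: "even d" and d0: "0 < d" and i: "i < n" and j: "j < n"
  defines "g \<equiv> rename_vars Bmap (fentry n d i j :: (xvar,'a::field) mpoly)"
  shows "mat_rank (pcm (Yvars n d) (Zvars n d) g) = n ^ (d - 1)"
    and "nonzero_cols (Yvars n d) (Zvars n d) g = (\<lambda>ls. ysum i ls (Od d)) ` LS n d i j"
proof -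
  have lenLS: "length ls = d" "last (i#ls) = j" if "ls \<in> LS n d i j" for ls
    using that by (auto simp: LS_def)
  have inj: "inj_on (\<lambda>ls. ysum i ls {..<d}) (LS n d i j)"
    by (rule inj_onI) (use ymono_inj lenLS in blast)
  have lg: "Poly_Mapping.lookup g m = (if m \<in> (\<lambda>ls. ysum i ls {..<d}) ` LS n d i j then 1 else 0)" for m
    unfolding g_def g_expand by (rule lookup_sum_single_inj[OF finite_LS inj])
  have key: "Poly_Mapping.lookup g (p+q) \<noteq> 0 \<longleftrightarrow> (\<exists>ls\<in>LS n d i j. p = ysum i ls (Ev d) \<and> q = ysum i ls (Od d))"
    if p: "p \<in> mlmonos (Yvars n d)" and q: "q \<in> mlmonos (Zvars n d)" for p q
  proof
    assume "Poly_Mapping.lookup g (p+q) \<noteq> 0"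
    then obtain ls where "ls \<in> LS n d i j" "p + q = ysum i ls {..<d}" using lg by (auto split: if_splits)
    then show "\<exists>ls\<in>LS n d i j. p = ysum i ls (Ev d) \<and> q = ysum i ls (Od d)" using decomp[OF p q] by blast
  next
    assume "\<exists>ls\<in>LS n d i j. p = ysum i ls (Ev d) \<and> q = ysum i ls (Od d)"
    then obtain ls where "ls \<in> LS n d i j" "p + q = ysum i ls {..<d}" using ysum_split by metis
    then show "Poly_Mapping.lookup g (p+q) \<noteq> 0" using lg by auto
  qed
  have one: "Poly_Mapping.lookup g m = 1 \<longleftrightarrow> Poly_Mapping.lookup g m \<noteq> 0" for m using lg by auto
  have NP: "{(p,q). p\<in>mlmonos (Yvars n d) \<and> q\<in>mlmonos (Zvars n d) \<and> Poly_Mapping.lookup g (p+q) = 1}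
      = (\<lambda>ls. (ysum i ls (Ev d), ysum i ls (Od d))) ` LS n d i j"
  proof (rule Set.set_eqI)
    fix x
    show "x \<in> {(p,q). p\<in>mlmonos (Yvars n d) \<and> q\<in>mlmonos (Zvars n d) \<and> Poly_Mapping.lookup g (p+q) = 1}
      \<longleftrightarrow> x \<in> (\<lambda>ls. (ysum i ls (Ev d), ysum i ls (Od d))) ` LS n d i j"
    proof
      assume "x \<in> {(p,q). p\<in>mlmonos (Yvars n d) \<and> q\<in>mlmonos (Zvars n d) \<and> Poly_Mapping.lookup g (p+q) = 1}"
      then obtain p q where h: "x = (p,q)" "p\<in>mlmonos (Yvars n d)" "q\<in>mlmonos (Zvars n d)" "Poly_Mapping.lookup g (p+q) = 1"
        by blast
      then obtain ls where "ls\<in>LS n d i j" "p = ysum i ls (Ev d)" "q = ysum i ls (Od d)" using key by force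
      then show "x \<in> (\<lambda>ls. (ysum i ls (Ev d), ysum i ls (Od d))) ` LS n d i j" using h by blast
    next
      assume "x \<in> (\<lambda>ls. (ysum i ls (Ev d), ysum i ls (Od d))) ` LS n d i j"
      then obtain ls where h: "ls\<in>LS n d i j" "x = (ysum i ls (Ev d), ysum i ls (Od d))" by blast
      have m: "ysum i ls (Ev d) \<in> mlmonos (Yvars n d)" "ysum i ls (Od d) \<in> mlmonos (Zvars n d)"
        using Ypart_mem[OF i h(1)] Zpart_mem[OF i h(1)] .
      then have "Poly_Mapping.lookup g (ysum i ls (Ev d) + ysum i ls (Od d)) = 1"
        using key[OF m] one h(1) by blast
      then show "x \<in> {(p,q). p\<in>mlmonos (Yvars n d) \<and> q\<in>mlmonos (Zvars n d) \<and> Poly_Mapping.lookup g (p+q) = 1}"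
        using h m by blast
    qed
  qed
  have Zinj: "ls = ls'" if "ls \<in> LS n d i j" "ls' \<in> LS n d i' j'" "ysum i ls (Od d) = ysum i ls' (Od d)" for ls ls' i' j'
    using Zpart_inj[of ls d ls' i] that ev by (auto simp: LS_def)
  have Yinj: "ls = ls'" if "ls \<in> LS n d i j" "ls' \<in> LS n d i j" "ysum i ls (Ev d) = ysum i ls' (Ev d)" for ls ls'
    using Ypart_inj[of ls d ls' i] that d0 by (auto simp: LS_def)
  have "mat_rank (pcm (Yvars n d) (Zvars n d) g)
     = card {(p,q). p\<in>mlmonos (Yvars n d) \<and> q\<in>mlmonos (Zvars n d) \<and> Poly_Mapping.lookup g (p+q) = 1}"
  proof (rule pcm_rank_generic[OF finite_mlmonos[OF finite_Yvars] finite_mlmonos[OF finite_Zvars]])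
    show "\<forall>m. Poly_Mapping.lookup g m = 0 \<or> Poly_Mapping.lookup g m = 1" using lg by auto
    show "\<forall>p\<in>mlmonos (Yvars n d). \<forall>q\<in>mlmonos (Zvars n d). \<forall>q'\<in>mlmonos (Zvars n d).
              Poly_Mapping.lookup g (p+q) = 1 \<longrightarrow> Poly_Mapping.lookup g (p+q') = 1 \<longrightarrow> q = q'"
    proof (intro ballI impI)
      fix p q q' assume m: "p\<in>mlmonos (Yvars n d)" "q\<in>mlmonos (Zvars n d)" "q'\<in>mlmonos (Zvars n d)"
        and l: "Poly_Mapping.lookup g (p+q) = 1" "Poly_Mapping.lookup g (p+q') = 1"
      obtain ls where a: "ls\<in>LS n d i j" "p = ysum i ls (Ev d)" "q = ysum i ls (Od d)"
        using key[OF m(1,2)] l(1) by auto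
      obtain ls' where b: "ls'\<in>LS n d i j" "p = ysum i ls' (Ev d)" "q' = ysum i ls' (Od d)"
        using key[OF m(1,3)] l(2) by auto
      have "ls = ls'" using Yinj[OF a(1) b(1)] a(2) b(2) by simp
      then show "q = q'" using a b by simp
    qed
    show "\<forall>p\<in>mlmonos (Yvars n d). \<forall>p'\<in>mlmonos (Yvars n d). \<forall>q\<in>mlmonos (Zvars n d).
              Poly_Mapping.lookup g (p+q) = 1 \<longrightarrow> Poly_Mapping.lookup g (p'+q) = 1 \<longrightarrow> p = p'"
    proof (intro ballI impI)
      fix p p' q assume m: "p\<in>mlmonos (Yvars n d)" "p'\<in>mlmonos (Yvars n d)" "q\<in>mlmonos (Zvars n d)"
        and l: "Poly_Mapping.lookup g (p+q) = 1" "Poly_Mapping.lookup g (p'+q) = 1"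
      obtain ls where a: "ls\<in>LS n d i j" "p = ysum i ls (Ev d)" "q = ysum i ls (Od d)"
        using key[OF m(1,3)] l(1) by auto
      obtain ls' where b: "ls'\<in>LS n d i j" "p' = ysum i ls' (Ev d)" "q = ysum i ls' (Od d)"
        using key[OF m(2,3)] l(2) by auto
      have "ls = ls'" using Zinj[OF a(1) b(1)] a(3) b(3) by simp
      then show "p = p'" using a b by simp
    qed
  qed
  also have "\<dots> = card (LS n d i j)" unfolding NP
    by (rule card_image) (auto simp: inj_on_def dest: Zinj)
  also have "\<dots> = n ^ (d - 1)" using card_LS[OF j d0] .
  finally show "mat_rank (pcm (Yvars n d) (Zvars n d) g) = n ^ (d - 1)" .
  show "nonzero_cols (Yvars n d) (Zvars n d) g = (\<lambda>ls. ysum i ls (Od d)) ` LS n d i j"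
    unfolding nonzero_cols_def pcm_entry_def
  proof (rule Set.set_eqI)
    fix q
    show "q \<in> {q \<in> mlmonos (Zvars n d). \<exists>p\<in>mlmonos (Yvars n d). Poly_Mapping.lookup g (p + q) \<noteq> 0}
       \<longleftrightarrow> q \<in> (\<lambda>ls. ysum i ls (Od d)) ` LS n d i j"
    proof
      assume "q \<in> {q \<in> mlmonos (Zvars n d). \<exists>p\<in>mlmonos (Yvars n d). Poly_Mapping.lookup g (p + q) \<noteq> 0}"
      then obtain p where "q \<in> mlmonos (Zvars n d)" "p\<in>mlmonos (Yvars n d)" "Poly_Mapping.lookup g (p + q) \<noteq> 0"
        by blast
      then obtain ls where "ls\<in>LS n d i j" "q = ysum i ls (Od d)" using key by blast
      then show "q \<in> (\<lambda>ls. ysum i ls (Od d)) ` LS n d i j" by blast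
    next
      assume "q \<in> (\<lambda>ls. ysum i ls (Od d)) ` LS n d i j"
      then obtain ls where h: "ls\<in>LS n d i j" "q = ysum i ls (Od d)" by blast
      have m: "ysum i ls (Ev d) \<in> mlmonos (Yvars n d)" "ysum i ls (Od d) \<in> mlmonos (Zvars n d)"
        using Ypart_mem[OF i h(1)] Zpart_mem[OF i h(1)] .
      then have "Poly_Mapping.lookup g (ysum i ls (Ev d) + ysum i ls (Od d)) \<noteq> 0"
        using key[OF m] h(1) by blast
      then show "q \<in> {q \<in> mlmonos (Zvars n d). \<exists>p\<in>mlmonos (Yvars n d). Poly_Mapping.lookup g (p + q) \<noteq> 0}"
        using h m by blast
    qed
  qed
qed


theorem lemma12:
  fixes n d' :: nat
  assumes "n \<ge> 1" and "d' \<ge> 1"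
  defines "d \<equiv> 2 * d'"
  shows "(\<forall>i<n. \<forall>j<n.
            mat_rank (pcm (Yvars n d) (Zvars n d)
                        (rename_vars Bmap (fentry n d i j :: (xvar,'a::field) mpoly))) = n ^ (d - 1))
       \<and> (\<forall>i<n. \<forall>j<n. \<forall>j'<n. j \<noteq> j' \<longrightarrow>
            nonzero_cols (Yvars n d) (Zvars n d) (rename_vars Bmap (fentry n d i j :: (xvar,'a) mpoly))
            \<inter> nonzero_cols (Yvars n d) (Zvars n d) (rename_vars Bmap (fentry n d i j' :: (xvar,'a) mpoly))
            = {})"
proof -
  have ev: "even d" and d0: "0 < d" using assms(2) unfolding d_def by auto
  show ?thesis
  proof (intro conjI allI impI)
    fix i j assume "i < n" "j < n"
    then show "mat_rank (pcm (Yvars n d) (Zvars n d)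
                        (rename_vars Bmap (fentry n d i j :: (xvar,'a::field) mpoly))) = n ^ (d - 1)"
      using main_ij(1)[OF ev d0] by blast
  next
    fix i j j' assume h: "i < n" "j < n" "j' < n" "j \<noteq> j'"
    show "nonzero_cols (Yvars n d) (Zvars n d) (rename_vars Bmap (fentry n d i j :: (xvar,'a) mpoly))
            \<inter> nonzero_cols (Yvars n d) (Zvars n d) (rename_vars Bmap (fentry n d i j' :: (xvar,'a) mpoly))
            = {}"
    proof (rule ccontr)
      assume "nonzero_cols (Yvars n d) (Zvars n d) (rename_vars Bmap (fentry n d i j :: (xvar,'a) mpoly))
            \<inter> nonzero_cols (Yvars n d) (Zvars n d) (rename_vars Bmap (fentry n d i j' :: (xvar,'a) mpoly))
            \<noteq> {}"
      then obtain q where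
        "q \<in> nonzero_cols (Yvars n d) (Zvars n d) (rename_vars Bmap (fentry n d i j :: (xvar,'a) mpoly))"
        "q \<in> nonzero_cols (Yvars n d) (Zvars n d) (rename_vars Bmap (fentry n d i j' :: (xvar,'a) mpoly))"
        by blast
      then obtain ls ls' where a: "ls \<in> LS n d i j" "q = ysum i ls (Od d)"
        and b: "ls' \<in> LS n d i j'" "q = ysum i ls' (Od d)"
        unfolding main_ij(2)[OF ev d0 h(1) h(2)] main_ij(2)[OF ev d0 h(1) h(3)] by blast
      have "ls = ls'" using Zpart_inj[of ls d ls' i] a b ev by (auto simp: LS_def)
      then show False using a(1) b(1) h(4) by (auto simp: LS_def)
    qed
  qed
qed

end
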